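(* Let $A$ be a partially symmetric 0-dialgebra. Then for all $x,y\in A$, $\mathrm{sym}(x\dashv y^\ast)=\mathrm{sym}(x^\ast\dashv y)$ and $\mathrm{sym}(x\dashv y)=\mathrm{sym}(x^\ast\dashv y^\ast)$.
   Context: A 0-dialgebra with involution is a vector space with bilinear operations $\dashv,\vdash$ satisfying $a\dashv(b\dashv c)=a\dashv(b\vdash c)$ and $(a\dashv b)\vdash c=(a\vdash b)\vdash c$, together with a linear map $\ast$ with $(a^\ast)^\ast=a$, $(a\dashv b)^\ast=b^\ast\vdash a^\ast$, $(a\vdash b)^\ast=b^\ast\dashv a^\ast$. Write $\mathrm{sym}(x)=x+x^\ast$ and $\{x,y\}=x\dashv y-y\vdash x$. Such a structure is partially symmetric if $\{\mathrm{sym}(x),y\}=0$ and $\{x,\mathrm{sym}(y)\}=0$ for all $x,y$. *)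

theory Defs
  imports Main
begin

definition vec_space :: "('k::field \<Rightarrow> 'v::ab_group_add \<Rightarrow> 'v) \<Rightarrow> bool" where
  "vec_space sm \<longleftrightarrow>
     (\<forall>a x y. sm a (x + y) = sm a x + sm a y) \<and>
     (\<forall>a b x. sm (a + b) x = sm a x + sm b x) \<and>
     (\<forall>a b x. sm (a * b) x = sm a (sm b x)) \<and>
     (\<forall>x. sm 1 x = x)"

definition bilinear_op :: "('k::field \<Rightarrow> 'v::ab_group_add \<Rightarrow> 'v) \<Rightarrow> ('v \<Rightarrow> 'v \<Rightarrow> 'v) \<Rightarrow> bool" where
  "bilinear_op sm m \<longleftrightarrow>
     (\<forall>x y z. m (x + y) z = m x z + m y z) \<and>
     (\<forall>x y z. m x (y + z) = m x y + m x z) \<and>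
     (\<forall>a x y. m (sm a x) y = sm a (m x y)) \<and>
     (\<forall>a x y. m x (sm a y) = sm a (m x y))"

definition linear_map :: "('k::field \<Rightarrow> 'v::ab_group_add \<Rightarrow> 'v) \<Rightarrow> ('v \<Rightarrow> 'v) \<Rightarrow> bool" where
  "linear_map sm f \<longleftrightarrow>
     (\<forall>x y. f (x + y) = f x + f y) \<and> (\<forall>a x. f (sm a x) = sm a (f x))"

text \<open>0-dialgebra with involution: left product l (\<dashv>), right product r (\<turnstile>), involution s (\<ast>).\<close>
definition zero_dialgebra_inv ::
  "('k::field \<Rightarrow> 'v::ab_group_add \<Rightarrow> 'v) \<Rightarrow> ('v \<Rightarrow> 'v \<Rightarrow> 'v) \<Rightarrow> ('v \<Rightarrow> 'v \<Rightarrow> 'v) \<Rightarrow> ('v \<Rightarrow> 'v) \<Rightarrow> bool" where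
  "zero_dialgebra_inv sm l r s \<longleftrightarrow>
     vec_space sm \<and> bilinear_op sm l \<and> bilinear_op sm r \<and> linear_map sm s \<and>
     (\<forall>a b c. l a (l b c) = l a (r b c)) \<and>
     (\<forall>a b c. r (l a b) c = r (r a b) c) \<and>
     (\<forall>a. s (s a) = a) \<and>
     (\<forall>a b. s (l a b) = r (s b) (s a)) \<and>
     (\<forall>a b. s (r a b) = l (s b) (s a))"

definition dsym :: "('v::ab_group_add \<Rightarrow> 'v) \<Rightarrow> 'v \<Rightarrow> 'v" where
  "dsym s x = x + s x"

definition dbr :: "('v::ab_group_add \<Rightarrow> 'v \<Rightarrow> 'v) \<Rightarrow> ('v \<Rightarrow> 'v \<Rightarrow> 'v) \<Rightarrow> 'v \<Rightarrow> 'v \<Rightarrow> 'v" where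
  "dbr l r x y = l x y - r y x"

definition partially_symmetric ::
  "('k::field \<Rightarrow> 'v::ab_group_add \<Rightarrow> 'v) \<Rightarrow> ('v \<Rightarrow> 'v \<Rightarrow> 'v) \<Rightarrow> ('v \<Rightarrow> 'v \<Rightarrow> 'v) \<Rightarrow> ('v \<Rightarrow> 'v) \<Rightarrow> bool" where
  "partially_symmetric sm l r s \<longleftrightarrow>
     zero_dialgebra_inv sm l r s \<and>
     (\<forall>x y. dbr l r (dsym s x) y = 0) \<and>
     (\<forall>x y. dbr l r x (dsym s y) = 0)"

end

theory Submission
  imports Defs
begin

theorem lemma5p2:
  fixes sm :: "'k::field \<Rightarrow> 'v::ab_group_add \<Rightarrow> 'v"
    and l r :: "'v \<Rightarrow> 'v \<Rightarrow> 'v" and s :: "'v \<Rightarrow> 'v"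
  assumes "partially_symmetric sm l r s"
  shows "\<forall>x y. dsym s (l x (s y)) = dsym s (l (s x) y) \<and>
               dsym s (l x y) = dsym s (l (s x) (s y))"
proof (intro allI)
  fix x y
  from assms have Z: "zero_dialgebra_inv sm l r s"
    and P1: "\<And>x y. l (x + s x) y = r y (x + s x)"
    and P2: "\<And>x y. l x (y + s y) = r (y + s y) x"
    by (auto simp: partially_symmetric_def dbr_def dsym_def)
  from Z have bl: "bilinear_op sm l" and br: "bilinear_op sm r"
    and ss: "\<And>a. s (s a) = a" and sl: "\<And>a b. s (l a b) = r (s b) (s a)"
    by (auto simp: zero_dialgebra_inv_def)
  from bl have la: "\<And>x y z. l (x + y) z = l x z + l y z" "\<And>x y z. l x (y + z) = l x y + l x z"
    by (auto simp: bilinear_op_def)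
  from br have ra: "\<And>x y z. r (x + y) z = r x z + r y z" "\<And>x y z. r x (y + z) = r x y + r x z"
    by (auto simp: bilinear_op_def)
  have e1: "l x y + l (s x) y = r y x + r y (s x)" using P1[of x y] la ra by simp
  have e2: "l x y + l x (s y) = r y x + r (s y) x" using P2[of x y] la ra by simp
  have e3: "l (s x) y + l (s x) (s y) = r y (s x) + r (s y) (s x)"
    using P2[of "s x" y] la ra by simp
  have a1: "l x (s y) = r y x + r (s y) x - l x y" using e2 by (simp add: algebra_simps)
  have a2: "l (s x) y = r y x + r y (s x) - l x y" using e1 by (simp add: algebra_simps)
  have a3: "l (s x) (s y) = r y (s x) + r (s y) (s x) - l (s x) y" using e3 by (simp add: algebra_simps)
  have A: "l x (s y) + r y (s x) = l (s x) y + r (s y) x"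
    unfolding a1 a2 by (simp add: algebra_simps)
  have B: "l x y + r (s y) (s x) = l (s x) (s y) + r y x"
    unfolding a3 a2 by (simp add: algebra_simps)
  show "dsym s (l x (s y)) = dsym s (l (s x) y) \<and> dsym s (l x y) = dsym s (l (s x) (s y))"
    using A B by (simp add: dsym_def sl ss)
qed

end
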